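(* Let $n$ and $k$ be positive integers, let $E_{k}:=\{(i,j)\in\mathbb{Z}^{2}:|j-i|\geq k+1\}$, and let $h:\{0,1,\ldots,n-1\}\to\mathbb{R}$ be a nonincreasing function. Let $u:\{1,\ldots,n\}\to\mathbb{Z}$ be any function and let $Mu$ be its nondecreasing rearrangement. Then \[ \mathcal{H}(h,E_{k},u)\geq\mathcal{H}(h,E_{k},Mu). \]
   Context: For a function $u:\{1,\ldots,n\}\to\mathbb{Z}$, a symmetric set $E\subseteq\mathbb{Z}^{2}$ (i.e. $(i,j)\in E$ iff $(j,i)\in E$) and $h:\{0,\ldots,n-1\}\to\mathbb{R}$, define $J(E,u):=\{(x,y)\in\{1,\ldots,n\}^{2}:x\leq y,\ (u(x),u(y))\in E\}$ (pairs with $x=y$ are allowed) and $\mathcal{H}(h,E,u):=\sum_{(x,y)\in J(E,u)}h(y-x)$. The nondecreasing rearrangement of $u$ is $Mu:\{1,\ldots,n\}\to\mathbb{Z}$, $Mu(x):=\min\{j\in\mathbb{Z}:|\{y\in\{1,\ldots,n\}:u(y)\leq j\}|\geq x\}$, where $|A|$ is the cardinality of $A$. *)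

theory Defs
  imports Complex_Main
begin

definition symmetric_set :: "(int \<times> int) set \<Rightarrow> bool" where
  "symmetric_set E \<longleftrightarrow> (\<forall>i j. (i, j) \<in> E \<longleftrightarrow> (j, i) \<in> E)"

definition Jset :: "nat \<Rightarrow> (int \<times> int) set \<Rightarrow> (nat \<Rightarrow> int) \<Rightarrow> (nat \<times> nat) set" where
  "Jset n E u = {(x, y). x \<in> {1..n} \<and> y \<in> {1..n} \<and> x \<le> y \<and> (u x, u y) \<in> E}"

definition Hfun :: "nat \<Rightarrow> (nat \<Rightarrow> real) \<Rightarrow> (int \<times> int) set \<Rightarrow> (nat \<Rightarrow> int) \<Rightarrow> real" where
  "Hfun n h E u = (\<Sum>(x, y)\<in>Jset n E u. h (y - x))"

definition Mrearr :: "nat \<Rightarrow> (nat \<Rightarrow> int) \<Rightarrow> nat \<Rightarrow> int" where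
  "Mrearr n u x = (LEAST j::int. card {y \<in> {1..n}. u y \<le> j} \<ge> x)"

definition Ek :: "nat \<Rightarrow> (int \<times> int) set" where
  "Ek k = {(i, j). \<bar>j - i\<bar> \<ge> int k + 1}"

end

theory Submission
  imports Defs "HOL-Library.Multiset"
begin

definition badk :: "nat \<Rightarrow> int \<Rightarrow> int \<Rightarrow> bool" where
  "badk k a b \<longleftrightarrow> int k + 1 \<le> \<bar>b - a\<bar>"

definition rowL :: "(nat \<Rightarrow> real) \<Rightarrow> (int \<Rightarrow> bool) \<Rightarrow> int list \<Rightarrow> real" where
  "rowL h P zs = (\<Sum>j<length zs. if P (zs!j) then h (Suc j) else 0)"

definition HL :: "(nat \<Rightarrow> real) \<Rightarrow> nat \<Rightarrow> int list \<Rightarrow> real" where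
  "HL h k ws = (\<Sum>i<length ws. \<Sum>j<length ws.
      if i < j \<and> badk k (ws!i) (ws!j) then h (j - i) else 0)"

definition SS :: "(nat \<Rightarrow> real) \<Rightarrow> nat \<Rightarrow> nat \<Rightarrow> real" where
  "SS h L c = (\<Sum>i<c. h (L - i))"

definition mono_upto :: "(nat \<Rightarrow> real) \<Rightarrow> nat \<Rightarrow> bool" where
  "mono_upto h m \<longleftrightarrow> (\<forall>a b. a \<le> b \<longrightarrow> b \<le> m \<longrightarrow> h b \<le> h a)"

lemma mono_upto_le: "mono_upto h m \<Longrightarrow> m' \<le> m \<Longrightarrow> mono_upto h m'"
  unfolding mono_upto_def by auto

lemma HL_Cons: "HL h k (x#xs) = rowL h (badk k x) xs + HL h k xs"
proof -
  define ws where "ws = x # xs"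
  define G where "G = (\<lambda>i j. if i < j \<and> badk k (ws!i) (ws!j) then h (j - i) else 0)"
  have "HL h k (x#xs) = (\<Sum>i<Suc (length xs). \<Sum>j<Suc (length xs). G i j)"
    unfolding HL_def G_def ws_def by simp
  also have "\<dots> = (\<Sum>j<Suc (length xs). G 0 j) + (\<Sum>i<length xs. \<Sum>j<Suc (length xs). G (Suc i) j)"
    by (rule sum.lessThan_Suc_shift)
  also have "(\<Sum>j<Suc (length xs). G 0 j) = G 0 0 + (\<Sum>j<length xs. G 0 (Suc j))"
    by (rule sum.lessThan_Suc_shift)
  also have "(\<Sum>j<length xs. G 0 (Suc j)) = rowL h (badk k x) xs"
    unfolding rowL_def G_def ws_def by (intro sum.cong refl) simp
  also have "(\<Sum>i<length xs. \<Sum>j<Suc (length xs). G (Suc i) j) = HL h k xs"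
  proof -
    have "(\<Sum>j<Suc (length xs). G (Suc i) j) = (\<Sum>j<length xs. if i < j \<and> badk k (xs!i) (xs!j) then h (j - i) else 0)" for i
    proof -
      have "(\<Sum>j<Suc (length xs). G (Suc i) j) = G (Suc i) 0 + (\<Sum>j<length xs. G (Suc i) (Suc j))"
        by (rule sum.lessThan_Suc_shift)
      also have "(\<Sum>j<length xs. G (Suc i) (Suc j)) = (\<Sum>j<length xs. if i < j \<and> badk k (xs!i) (xs!j) then h (j - i) else 0)"
        by (rule sum.cong[OF refl]) (simp add: G_def ws_def)
      finally show ?thesis by (simp add: G_def)
    qed
    then show ?thesis
      unfolding HL_def by (rule sum.cong[OF refl])
  qed
  finally show ?thesis by (simp add: G_def)
qed

lemma rowL_snoc:
  "rowL h P (zs@[z]) = rowL h P zs + (if P z then h (Suc (length zs)) else 0)"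
  unfolding rowL_def
  by (simp add: nth_append cong: if_cong)

lemma SS_Suc: "SS h (Suc L) (Suc c) = h (Suc L) + SS h L c"
  unfolding SS_def by (simp only: sum.lessThan_Suc_shift) simp

lemma SS_shift: "mono_upto h (Suc L) \<Longrightarrow> SS h (Suc L) c \<le> SS h L c"
  unfolding SS_def mono_upto_def
  by (intro sum_mono) auto

lemma SS_diff: "SS h N c = SS h (N - 1) c + h N - h (N - c)"
proof (induction c)
  case 0
  then show ?case by (simp add: SS_def)
next
  case (Suc c)
  have e: "N - 1 - c = N - Suc c" by simp
  show ?case using Suc.IH unfolding SS_def by (simp add: e)
qed

lemma rowL_lower:
  "mono_upto h (length zs) \<Longrightarrow> SS h (length zs) (length (filter P zs)) \<le> rowL h P zs"
proof (induction zs rule: rev_induct)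
  case Nil
  then show ?case by (simp add: SS_def rowL_def)
next
  case (snoc z zs)
  have m: "mono_upto h (length zs)" by (rule mono_upto_le[OF snoc.prems]) simp
  have IH: "SS h (length zs) (length (filter P zs)) \<le> rowL h P zs" using snoc.IH m .
  show ?case
  proof (cases "P z")
    case True
    then show ?thesis using IH by (simp add: rowL_snoc SS_Suc)
  next
    case False
    have "SS h (Suc (length zs)) (length (filter P zs)) \<le> SS h (length zs) (length (filter P zs))"
      using snoc.prems by (intro SS_shift) simp
    then show ?thesis using IH False by (simp add: rowL_snoc)
  qed
qed

lemma rowL_sorted:
  "sorted zs \<Longrightarrow> (\<forall>a\<in>set zs. \<forall>b\<in>set zs. a \<le> b \<longrightarrow> P a \<longrightarrow> P b) \<Longrightarrow>
   rowL h P zs = SS h (length zs) (length (filter P zs))"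
proof (induction zs rule: rev_induct)
  case Nil
  then show ?case by (simp add: SS_def rowL_def)
next
  case (snoc z zs)
  have s: "sorted zs" and le: "\<forall>a\<in>set zs. a \<le> z" using snoc.prems(1) by (auto simp: sorted_append)
  have mono2: "\<forall>a\<in>set zs. \<forall>b\<in>set zs. a \<le> b \<longrightarrow> P a \<longrightarrow> P b"
    using snoc.prems(2) by simp
  have IH: "rowL h P zs = SS h (length zs) (length (filter P zs))"
    using snoc.IH[OF s mono2] .
  show ?case
  proof (cases "P z")
    case True
    then show ?thesis using IH by (simp add: rowL_snoc SS_Suc)
  next
    case False
    have np: "\<forall>a\<in>set zs. \<not> P a"
    proof
      fix a assume a: "a \<in> set zs"
      show "\<not> P a"
      proof
        assume "P a"
        moreover have "a \<le> z" using le a by blast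
        ultimately have "P z" using snoc.prems(2) a by simp
        then show False using False by simp
      qed
    qed
    then have "filter P zs = []" by (simp add: filter_empty_conv)
    moreover have "rowL h P zs = 0" unfolding rowL_def using np
      by (intro sum.neutral) auto
    ultimately show ?thesis using False by (simp add: rowL_snoc SS_def)
  qed
qed

lemma length_filter_mono':
  assumes "\<forall>x\<in>set xs. P x \<longrightarrow> Q x"
  shows "length (filter P xs) \<le> length (filter Q xs)"
  unfolding length_filter_conv_card
  by (rule card_mono) (use assms nth_mem in auto)

lemma length_filter_insort:
  "length (filter P (insort x ys)) = length (filter P ys) + (if P x then 1 else 0)"
proof -
  have "length (filter P (insort x ys)) = size (filter_mset P (mset (insort x ys)))"
    by (metis mset_filter size_mset)
  also have "\<dots> = size (filter_mset P (mset ys)) + (if P x then 1 else 0)" by simp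
  also have "size (filter_mset P (mset ys)) = length (filter P ys)"
    by (metis mset_filter size_mset)
  finally show ?thesis .
qed

lemma badk_mono: "x \<le> a \<Longrightarrow> a \<le> b \<Longrightarrow> badk k x a \<Longrightarrow> badk k x b"
  unfolding badk_def by (simp add: abs_of_nonneg)

lemma badk_mono_set: "\<forall>z\<in>S. y \<le> z \<Longrightarrow> x \<le> y \<Longrightarrow> \<forall>a\<in>S. \<forall>b\<in>S. a \<le> b \<longrightarrow> badk k x a \<longrightarrow> badk k x b"
  by (meson badk_mono order_trans)

lemma badk_shift: "y \<le> z \<Longrightarrow> y < x \<Longrightarrow> \<not> badk k y x \<Longrightarrow> badk k x z \<Longrightarrow> badk k y z"
  unfolding badk_def by (cases "x \<le> z") (simp_all add: abs_of_nonneg abs_of_neg)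

lemma insertion:
  assumes "sorted s" "Suc (length s) \<le> n" "mono_upto h (n - 1)"
  shows "HL h k (insort x s) \<le> HL h k s + SS h (length s) (length (filter (badk k x) s))"
  using assms(1,2)
proof (induction s)
  case Nil
  then show ?case by (simp add: HL_def SS_def)
next
  case (Cons y ys)
  have sy: "sorted ys" and yle: "\<forall>z\<in>set ys. y \<le> z" using Cons.prems(1) by auto
  show ?case
  proof (cases "x \<le> y")
    case True
    have "rowL h (badk k x) (y#ys) = SS h (length (y#ys)) (length (filter (badk k x) (y#ys)))"
    proof (rule rowL_sorted)
      show "sorted (y#ys)" using Cons.prems(1) .
      show "\<forall>a\<in>set (y#ys). \<forall>b\<in>set (y#ys). a \<le> b \<longrightarrow> badk k x a \<longrightarrow> badk k x b"
        by (rule badk_mono_set[where y=y]) (use yle True in auto)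
    qed
    then show ?thesis using True by (simp add: HL_Cons)
  next
    case False
    let ?N = "length ys"
    define r where "r = length (filter (badk k y) ys)"
    define b where "b = length (filter (badk k x) ys)"
    define d :: nat where "d = (if badk k y x then 1 else 0)"
    have IH: "HL h k (insort x ys) \<le> HL h k ys + SS h ?N b"
      using Cons.IH sy Cons.prems(2) b_def by simp
    have r1: "rowL h (badk k y) (insort x ys) = SS h (Suc ?N) (r + d)"
    proof -
      have yle2: "\<forall>z\<in>set (insort x ys). y \<le> z" using yle False by (simp add: set_insort_key)
      have "rowL h (badk k y) (insort x ys) = SS h (length (insort x ys)) (length (filter (badk k y) (insort x ys)))"
      proof (rule rowL_sorted)
        show "sorted (insort x ys)" using sy by (simp add: sorted_insort)
        show "\<forall>a\<in>set (insort x ys). \<forall>b\<in>set (insort x ys). a \<le> b \<longrightarrow> badk k y a \<longrightarrow> badk k y b"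
          by (rule badk_mono_set[where y=y]) (use yle2 in auto)
      qed
      then show ?thesis by (simp add: length_filter_insort r_def d_def)
    qed
    have r2: "rowL h (badk k y) ys = SS h ?N r"
      unfolding r_def
    proof (rule rowL_sorted)
      show "sorted ys" using sy .
      show "\<forall>a\<in>set ys. \<forall>b\<in>set ys. a \<le> b \<longrightarrow> badk k y a \<longrightarrow> badk k y b"
        by (rule badk_mono_set[where y=y]) (use yle in auto)
    qed
    have bxy: "badk k x y = badk k y x" unfolding badk_def by (simp add: abs_minus_commute)
    have c2: "length (filter (badk k x) (y#ys)) = b + d" by (simp add: b_def d_def bxy)
    have lhs: "HL h k (insort x (y#ys)) = SS h (Suc ?N) (r + d) + HL h k (insort x ys)"
      using False by (simp add: HL_Cons r1)
    have rhs: "HL h k (y#ys) = SS h ?N r + HL h k ys" by (simp add: HL_Cons r2)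
    have key: "SS h (Suc ?N) (r + d) + SS h ?N b \<le> SS h ?N r + SS h (Suc ?N) (b + d)"
    proof (cases "badk k y x")
      case True
      then show ?thesis by (simp add: d_def SS_Suc)
    next
      case F: False
      have "b \<le> r" unfolding b_def r_def
        using yle F False by (intro length_filter_mono') (meson badk_shift not_le)
      moreover have "Suc ?N \<le> n - 1" using Cons.prems(2) by simp
      ultimately have "h (Suc ?N - b) \<le> h (Suc ?N - r)"
      proof -
        assume br: "b \<le> r" and Nn: "Suc ?N \<le> n - 1"
        have "Suc ?N - r \<le> Suc ?N - b" using br by (rule diff_le_mono2)
        moreover have "Suc ?N - b \<le> n - 1" using Nn by linarith
        ultimately show ?thesis using assms(3) unfolding mono_upto_def by blast
      qed
      moreover have "SS h (Suc ?N) r = SS h ?N r + h (Suc ?N) - h (Suc ?N - r)"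
        using SS_diff[of h "Suc ?N" r] by simp
      moreover have "SS h (Suc ?N) b = SS h ?N b + h (Suc ?N) - h (Suc ?N - b)"
        using SS_diff[of h "Suc ?N" b] by simp
      ultimately show ?thesis using F by (simp add: d_def)
    qed
    have "HL h k (insort x (y#ys)) \<le> HL h k (y#ys) + SS h (Suc ?N) (b + d)"
      using lhs rhs key IH by linarith
    then show ?thesis using c2 by simp
  qed
qed

lemma main_sort:
  assumes "mono_upto h (n - 1)"
  shows "length ws \<le> n \<Longrightarrow> HL h k (sort ws) \<le> HL h k ws"
proof (induction ws)
  case Nil
  then show ?case by simp
next
  case (Cons x xs)
  have cnt: "length (filter (badk k x) (sort xs)) = length (filter (badk k x) xs)"
    by (simp add: filter_sort)
  have "HL h k (sort (x#xs)) = HL h k (insort x (sort xs))" by simp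
  also have "\<dots> \<le> HL h k (sort xs) + SS h (length xs) (length (filter (badk k x) (sort xs)))"
    using insertion[of "sort xs" n h k x] Cons.prems assms by simp
  also have "\<dots> \<le> HL h k xs + rowL h (badk k x) xs"
  proof -
    have "HL h k (sort xs) \<le> HL h k xs" using Cons.IH Cons.prems by simp
    moreover have "SS h (length xs) (length (filter (badk k x) xs)) \<le> rowL h (badk k x) xs"
      using Cons.prems assms by (intro rowL_lower) (auto intro: mono_upto_le)
    ultimately show ?thesis using cnt by simp
  qed
  also have "\<dots> = HL h k (x#xs)" by (simp add: HL_Cons)
  finally show ?case .
qed

declare upt_Suc[simp del]

lemma Hfun_HL:
  assumes "k \<ge> 1"
  shows "Hfun n h (Ek k) f = HL h k (map f [1..<Suc n])"
proof -
  let ?g = "\<lambda>x y. if x < y \<and> badk k (f x) (f y) then h (y - x) else 0"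
  let ?P = "\<lambda>p. fst p < snd p \<and> badk k (f (fst p)) (f (snd p))"
  have J: "Jset n (Ek k) f = {p \<in> {1..n}\<times>{1..n}. ?P p}"
  proof -
    have "x \<le> y \<and> int k + 1 \<le> \<bar>f y - f x\<bar> \<longleftrightarrow> x < y \<and> int k + 1 \<le> \<bar>f y - f x\<bar>" for x y
      using assms by (cases "x = y") auto
    then show ?thesis unfolding Jset_def Ek_def badk_def by auto
  qed
  have "Hfun n h (Ek k) f = (\<Sum>p\<in>{p \<in> {1..n}\<times>{1..n}. ?P p}. h (snd p - fst p))"
    unfolding Hfun_def J split_def ..
  also have "\<dots> = (\<Sum>p\<in>{1..n}\<times>{1..n}. ?g (fst p) (snd p))"
    by (subst sum.inter_filter) auto
  also have "\<dots> = (\<Sum>x\<in>{1..n}. \<Sum>y\<in>{1..n}. ?g x y)"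
    by (simp add: sum.cartesian_product split_def)
  also have "\<dots> = (\<Sum>i<n. \<Sum>j<n. ?g (Suc i) (Suc j))"
    by (simp add: sum.atLeast1_atMost_eq)
  also have "\<dots> = HL h k (map f [1..<Suc n])"
    unfolding HL_def length_map length_upt by (intro sum.cong refl) (simp_all add: nth_upt)
  finally show ?thesis .
qed

lemma Mrearr_sort: "map (Mrearr n u) [1..<Suc n] = sort (map u [1..<Suc n])"
proof (rule nth_equalityI)
  let ?ws = "map u [1..<Suc n]"
  let ?s = "sort ?ws"
  show "length (map (Mrearr n u) [1..<Suc n]) = length ?s" by (simp del: upt_Suc)
  fix i assume "i < length (map (Mrearr n u) [1..<Suc n])"
  then have i: "i < n" by (simp del: upt_Suc)
  have ls: "length ?s = n" by simp
  have srt: "sorted ?s" by simp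
  have cardeq: "card {y \<in> {1..n}. u y \<le> j} = card {t. t < n \<and> ?s!t \<le> j}" for j
  proof -
    have "card {y \<in> {1..n}. u y \<le> j} = card ({x. u x \<le> j} \<inter> set [1..<Suc n])"
      by (rule arg_cong[where f=card]) auto
    also have "\<dots> = length (filter (\<lambda>x. u x \<le> j) [1..<Suc n])"
      by (rule distinct_length_filter[symmetric]) simp
    also have "\<dots> = length (filter (\<lambda>v. v \<le> j) ?ws)"
      by (simp add: filter_map comp_def)
    also have "\<dots> = length (filter (\<lambda>v. v \<le> j) ?s)"
      by (simp add: filter_sort)
    also have "\<dots> = card {t. t < n \<and> ?s!t \<le> j}"
      by (simp add: length_filter_conv_card ls)
    finally show ?thesis .
  qed
  have "Mrearr n u (Suc i) = ?s ! i"
    unfolding Mrearr_def cardeq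
  proof (rule Least_equality)
    have "{..<Suc i} \<subseteq> {t. t < n \<and> ?s!t \<le> ?s!i}"
      using i srt ls by (auto intro: sorted_nth_mono)
    then have "card {..<Suc i} \<le> card {t. t < n \<and> ?s!t \<le> ?s!i}"
      by (rule card_mono[rotated]) simp
    then show "Suc i \<le> card {t. t < n \<and> ?s!t \<le> ?s!i}" by simp
  next
    fix j assume j: "Suc i \<le> card {t. t < n \<and> ?s!t \<le> j}"
    show "?s ! i \<le> j"
    proof (rule ccontr)
      assume "\<not> ?s ! i \<le> j"
      then have lt: "j < ?s ! i" by simp
      have "{t. t < n \<and> ?s!t \<le> j} \<subseteq> {..<i}"
      proof
        fix t assume t: "t \<in> {t. t < n \<and> ?s!t \<le> j}"
        show "t \<in> {..<i}"
        proof (rule ccontr)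
          assume "t \<notin> {..<i}"
          then have "i \<le> t" by simp
          then have "?s!i \<le> ?s!t" using srt t ls by (auto intro: sorted_nth_mono)
          then show False using t lt by simp
        qed
      qed
      then have "card {t. t < n \<and> ?s!t \<le> j} \<le> card {..<i}"
        by (rule card_mono[rotated]) simp
      then show False using j by simp
    qed
  qed
  then show "map (Mrearr n u) [1..<Suc n] ! i = ?s ! i" using i by (simp del: upt_Suc)
qed

theorem theorem2p2:
  fixes n k :: nat and h :: "nat \<Rightarrow> real" and u :: "nat \<Rightarrow> int"
  assumes "n \<ge> 1" and "k \<ge> 1"
    and "\<And>a b. a \<le> b \<Longrightarrow> b \<le> n - 1 \<Longrightarrow> h b \<le> h a"
  shows "Hfun n h (Ek k) u \<ge> Hfun n h (Ek k) (Mrearr n u)"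
proof -
  have m: "mono_upto h (n - 1)" using assms(3) unfolding mono_upto_def by blast
  have "Hfun n h (Ek k) (Mrearr n u) = HL h k (sort (map u [1..<Suc n]))"
    using assms(2) by (simp only: Hfun_HL Mrearr_sort)
  also have "\<dots> \<le> HL h k (map u [1..<Suc n])"
    using m by (rule main_sort) (simp del: upt_Suc)
  also have "\<dots> = Hfun n h (Ek k) u" using assms(2) by (simp only: Hfun_HL)
  finally show ?thesis .
qed

end
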